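(* Fix $\epsilon>0$ and let $N>0$ be such that: whenever $K_{\alpha\beta}(x,y)>\epsilon$ for some $\alpha,\beta\in S(1)$ and some $(x,y)\in Q_{\mathbf x}\times Q_{\mathbf y}$, then $K_{\alpha\beta}(a,b)>\epsilon/2$ for all $(a,b)\in Q_{\mathbf x}\times Q_{\mathbf y}$. Let $\lambda\mapsto r_\lambda$ satisfy $r_\lambda\to\infty$. Then, as $\lambda\to\infty$, the number of singular pairs $(Q,Q')\in\mathcal Q_\lambda\times\mathcal Q_\lambda$ is $o(r_\lambda^2\log r_\lambda)$.
   Context: $K(x,y)=2\pi J_0(\|x-y\|)$ on $\mathbb R^2\times\mathbb R^2$ ($J_0$ the Bessel function of the first kind of order 0); $K_{\alpha\beta}=\partial_x^\alpha\partial_y^\beta K$; $S(1)$ is the set of multi-indices in $\mathbb N^2$ of order $\le1$. For $\mathbf z\in\mathbb Z^2$, $Q_{\mathbf z}=\mathbf z/N+[0,1/N)^2$, and $\mathcal Q_\lambda$ is the set of those $Q_{\mathbf z}$ intersecting the ball of radius $r_\lambda$ centred at the origin. Two squares $Q_{\mathbf x},Q_{\mathbf y}$ are singular if there exist $(x,y)\in Q_{\mathbf x}\times Q_{\mathbf y}$ and $\alpha,\beta\in S(1)$ with $K_{\alpha\beta}(x,y)>\epsilon$. *)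

theory Defs
  imports "HOL-Analysis.Analysis" "HOL-Library.Landau_Symbols"
begin

definition bessel_J0 :: "real \<Rightarrow> real" where
  "bessel_J0 r = (\<Sum>k. (-1) ^ k / (fact k)^2 * (r / 2) ^ (2 * k))"

definition kernelK :: "real^2 \<Rightarrow> real^2 \<Rightarrow> real" where
  "kernelK x y = 2 * pi * bessel_J0 (norm (x - y))"

definition pdiff :: "2 \<Rightarrow> (real^2 \<Rightarrow> real) \<Rightarrow> real^2 \<Rightarrow> real" where
  "pdiff i f x = deriv (\<lambda>t. f (x + t *\<^sub>R axis i 1)) 0"

definition pdiff_multi :: "nat \<times> nat \<Rightarrow> (real^2 \<Rightarrow> real) \<Rightarrow> real^2 \<Rightarrow> real" where
  "pdiff_multi \<alpha> f = (pdiff 1 ^^ fst \<alpha>) ((pdiff 2 ^^ snd \<alpha>) f)"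

definition K_ab :: "nat \<times> nat \<Rightarrow> nat \<times> nat \<Rightarrow> real^2 \<Rightarrow> real^2 \<Rightarrow> real" where
  "K_ab \<alpha> \<beta> x y = pdiff_multi \<alpha> (\<lambda>x'. pdiff_multi \<beta> (\<lambda>y'. kernelK x' y') y) x"

definition S1 :: "(nat \<times> nat) set" where
  "S1 = {\<alpha>. fst \<alpha> + snd \<alpha> \<le> 1}"

definition sq :: "real \<Rightarrow> int \<times> int \<Rightarrow> (real^2) set" where
  "sq N z = {p. real_of_int (fst z) / N \<le> p$1 \<and> p$1 < (real_of_int (fst z) + 1) / N \<and>
                real_of_int (snd z) / N \<le> p$2 \<and> p$2 < (real_of_int (snd z) + 1) / N}"

text \<open>Indices of the squares meeting the ball of radius r centred at 0 (the family Q_lambda,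
  with r = r_lambda).  Since z \<mapsto> Q_z is injective for N > 0, squares are identified with
  their indices.\<close>
definition sq_family :: "real \<Rightarrow> real \<Rightarrow> (int \<times> int) set" where
  "sq_family N r = {z. sq N z \<inter> ball 0 r \<noteq> {}}"

definition singular_pair :: "real \<Rightarrow> real \<Rightarrow> int \<times> int \<Rightarrow> int \<times> int \<Rightarrow> bool" where
  "singular_pair \<epsilon> N zx zy \<longleftrightarrow>
     (\<exists>x\<in>sq N zx. \<exists>y\<in>sq N zy. \<exists>\<alpha>\<in>S1. \<exists>\<beta>\<in>S1. K_ab \<alpha> \<beta> x y > \<epsilon>)"

end

theory Submission
  imports Defs "HOL-Real_Asymp.Real_Asymp"
begin


definition bc :: "nat \<Rightarrow> real" where
  "bc k = (-1)^k / (4^k * (fact k)^2)"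

definition gg :: "real \<Rightarrow> real" where "gg s = (\<Sum>k. bc k * s^k)"
definition gg1 :: "real \<Rightarrow> real" where "gg1 s = (\<Sum>k. diffs bc k * s^k)"
definition gg2 :: "real \<Rightarrow> real" where "gg2 s = (\<Sum>k. diffs (diffs bc) k * s^k)"

lemma bc_summable: "summable (\<lambda>k. bc k * s^k)"
proof (rule summable_comparison_test[OF _ summable_exp[of "\<bar>s\<bar>"]])
  show "\<exists>N. \<forall>n\<ge>N. norm (bc n * s ^ n) \<le> inverse (fact n) * \<bar>s\<bar> ^ n"
  proof (intro exI allI impI)
    fix n :: nat
    have f1: "(1::real) \<le> fact n" by simp
    have a: "fact n \<le> (fact n)^2 * (1::real)"
      using f1 by (simp add: power2_eq_square mult_le_cancel_left1)
    have "(1::real) \<le> 4^n" by simp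
    hence b: "(fact n)^2 \<le> 4^n * (fact n)^2 * (1::real)"
      by (simp add: mult_le_cancel_right1)
    have "fact n \<le> 4^n * (fact n)^2 * (1::real)" using a b by linarith
    then have "inverse (4^n * (fact n)^2) \<le> inverse (fact n :: real)"
      by (intro le_imp_inverse_le) auto
    then show "norm (bc n * s ^ n) \<le> inverse (fact n) * \<bar>s\<bar> ^ n"
      unfolding bc_def by (simp add: abs_mult power_abs divide_inverse mult_right_mono)
  qed
qed

lemma bc_summable1: "summable (\<lambda>k. diffs bc k * s^k)"
  by (rule termdiff_converges_all) (rule bc_summable)
lemma bc_summable2: "summable (\<lambda>k. diffs (diffs bc) k * s^k)"
  by (rule termdiff_converges_all) (rule bc_summable1)

lemma gg_deriv: "(gg has_field_derivative gg1 s) (at s)"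
  unfolding gg_def gg1_def by (rule termdiffs_strong_converges_everywhere) (rule bc_summable)
lemma gg1_deriv: "(gg1 has_field_derivative gg2 s) (at s)"
  unfolding gg2_def gg1_def by (rule termdiffs_strong_converges_everywhere) (rule bc_summable1)

lemma bc_Suc: "bc (Suc n) = - bc n / (4 * (real n + 1)^2)"
  unfolding bc_def by (simp add: field_simps power2_eq_square)

lemma gg_ode: "s * gg2 s + gg1 s + gg s / 4 = 0"
proof -
  define e where "e n = real n * (real n + 1) * bc (Suc n) * s^n" for n
  have d1: "diffs bc n = (real n + 1) * bc (Suc n)" for n by (simp add: diffs_def)
  have d2: "diffs (diffs bc) n = (real n + 1) * (real n + 2) * bc (Suc (Suc n))" for n
    by (simp add: diffs_def algebra_simps)
  have "(\<lambda>n. diffs (diffs bc) n * s^n) sums gg2 s"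
    unfolding gg2_def using bc_summable2 by (rule summable_sums)
  hence "(\<lambda>n. s * (diffs (diffs bc) n * s^n)) sums (s * gg2 s)"
    by (rule sums_mult)
  moreover have "(\<lambda>n. s * (diffs (diffs bc) n * s^n)) = (\<lambda>n. e (Suc n))"
    by (auto simp: e_def d2 algebra_simps)
  ultimately have "(\<lambda>n. e (Suc n)) sums (s * gg2 s)" by simp
  hence E: "e sums (s * gg2 s)" using sums_Suc_iff[of e] by (simp add: e_def)
  have "(\<lambda>n. diffs bc n * s^n) sums gg1 s"
    unfolding gg1_def using bc_summable1 by (rule summable_sums)
  from sums_add[OF E this] have "(\<lambda>n. e n + diffs bc n * s^n) sums (s * gg2 s + gg1 s)" .
  moreover have "(\<lambda>n. e n + diffs bc n * s^n) = (\<lambda>n. (-1/4) * (bc n * s^n))"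
  proof
    fix n
    have "e n + diffs bc n * s^n = (real n + 1)^2 * bc (Suc n) * s^n"
      by (simp add: e_def d1 power2_eq_square algebra_simps)
    also have "\<dots> = (-1/4) * (bc n * s^n)" by (simp add: bc_Suc field_simps)
    finally show "e n + diffs bc n * s^n = (-1/4) * (bc n * s^n)" .
  qed
  ultimately have "(\<lambda>n. (-1/4) * (bc n * s^n)) sums (s * gg2 s + gg1 s)" by simp
  moreover have "(\<lambda>n. (-1/4) * (bc n * s^n)) sums ((-1/4) * gg s)"
    unfolding gg_def by (intro sums_mult summable_sums bc_summable)
  ultimately have "s * gg2 s + gg1 s = (-1/4) * gg s" using sums_unique2 by blast
  thus ?thesis by simp
qed

lemma J0_gg: "bessel_J0 r = gg (r^2)"
  unfolding bessel_J0_def gg_def bc_def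
  by (intro suminf_cong) (simp add: power_mult power_divide power2_eq_square)



lemma sq_deriv: "((\<lambda>t::real. t^2) has_real_derivative 2 * t) (at t)"
  by (auto intro!: derivative_eq_intros)

lemma Q_deriv: "((\<lambda>t. gg (t^2)) has_real_derivative gg1 (t^2) * (2 * t)) (at t)"
  using DERIV_chain2[OF gg_deriv sq_deriv] .
lemma P_deriv: "((\<lambda>t. gg1 (t^2)) has_real_derivative gg2 (t^2) * (2 * t)) (at t)"
  using DERIV_chain2[OF gg1_deriv sq_deriv] .

definition En :: "real \<Rightarrow> real" where
  "En t = t * (4 * t^2 * (gg1 (t^2))^2 + (gg (t^2))^2) + 2 * t * gg (t^2) * gg1 (t^2) + (gg (t^2))^2 / (2 * t)"

lemma En_deriv:
  assumes "t > 0"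
  shows "(En has_real_derivative (-(((gg (t^2))^2) / (2 * t^2)))) (at t)"
proof -
  note Q = Q_deriv[of t] and P = P_deriv[of t]
  note I = DERIV_ident[of "at t :: real filter"]
  have tz: "2 * t \<noteq> 0" using assms by simp
  note X1 = DERIV_mult[OF I DERIV_add[OF DERIV_mult[OF DERIV_cmult[OF sq_deriv[of t], of 4] DERIV_power[OF P, of 2]] DERIV_power[OF Q, of 2]]]
  note X2 = DERIV_mult[OF DERIV_mult[OF DERIV_cmult[OF I, of 2] Q] P]
  note X3 = DERIV_divide[OF DERIV_power[OF Q, of 2] DERIV_cmult[OF I, of 2] tz]
  note X = DERIV_add[OF DERIV_add[OF X1 X2] X3]
  have R: "gg2 (t^2) = - (gg1 (t^2) + gg (t^2) / 4) / t^2"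
    using gg_ode[of "t^2"] assms by (simp add: field_simps)
  show ?thesis
    unfolding En_def[abs_def]
    apply (rule DERIV_cong[OF X])
    unfolding R
    using assms by (simp add: power2_eq_square field_simps) (simp add: algebra_simps)?
qed

lemma En_mono: assumes "1 \<le> t" shows "En t \<le> En 1"
proof (rule DERIV_nonpos_imp_nonincreasing[OF assms])
  fix x :: real assume "1 \<le> x" "x \<le> t"
  hence "DERIV En x :> -(((gg (x^2))^2) / (2 * x^2))" by (intro En_deriv) linarith
  thus "\<exists>y. DERIV En x :> y \<and> y \<le> 0" by (intro exI conjI) auto
qed

lemma En_lower:
  assumes "1 \<le> t"
  shows "(t/2) * ((gg (t^2))^2 + 4 * t^2 * (gg1 (t^2))^2) \<le> En t"
proof -
  define Q where "Q = gg (t^2)"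
  define P where "P = gg1 (t^2)"
  have X0: "0 \<le> Q^2 + 4 * t^2 * P^2" by simp
  have h1: "(1/2) * (Q^2 + 4 * t^2 * P^2) \<le> (t/2) * (Q^2 + 4 * t^2 * P^2)"
    using assms X0 by (intro mult_right_mono) auto
  have h2: "0 \<le> (1/2) * (Q^2 + 4 * t^2 * P^2) + 2 * t * Q * P"
  proof -
    have "0 \<le> (Q + 2 * t * P)^2 / 2" by simp
    also have "\<dots> = (1/2) * (Q^2 + 4 * t^2 * P^2) + 2 * t * Q * P"
      by (simp add: power2_eq_square algebra_simps)
    finally show ?thesis .
  qed
  have h3: "0 \<le> Q^2 / (2 * t)" using assms by simp
  have "En t = t * (4 * t^2 * P^2 + Q^2) + 2 * t * Q * P + Q^2 / (2 * t)"
    by (simp add: En_def Q_def P_def)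
  also have "\<dots> = (t/2) * (Q^2 + 4 * t^2 * P^2) + (t/2) * (Q^2 + 4 * t^2 * P^2) + 2 * t * Q * P + Q^2 / (2 * t)"
    by (simp add: algebra_simps)
  finally have "En t = (t/2) * (Q^2 + 4 * t^2 * P^2) + (t/2) * (Q^2 + 4 * t^2 * P^2) + 2 * t * Q * P + Q^2 / (2 * t)" .
  with h1 h2 h3 show ?thesis unfolding Q_def[symmetric] P_def[symmetric] by linarith
qed

lemma gg_decay:
  assumes "\<delta> > 0"
  shows "\<exists>S0\<ge>1. \<forall>s\<ge>S0. \<bar>gg s\<bar> \<le> \<delta> \<and> sqrt s * \<bar>gg1 s\<bar> \<le> \<delta>"
proof -
  define C where "C = \<bar>En 1\<bar>"
  define S0 where "S0 = (2 * C/\<delta>^2 + 1)^2"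
  have C0: "C \<ge> 0" by (simp add: C_def)
  have A0: "2 * C/\<delta>^2 \<ge> 0" using C0 assms by simp
  have "1 \<le> S0" unfolding S0_def using A0 by (intro one_le_power) linarith
  moreover have "\<bar>gg s\<bar> \<le> \<delta> \<and> sqrt s * \<bar>gg1 s\<bar> \<le> \<delta>" if s: "s \<ge> S0" for s
  proof -
    define t where "t = sqrt s"
    have "sqrt S0 = 2 * C/\<delta>^2 + 1" unfolding S0_def using A0 by simp
    hence tge: "t \<ge> 2 * C/\<delta>^2 + 1" unfolding t_def using real_sqrt_le_mono[OF s] by simp
    hence t1: "t \<ge> 1" using A0 by linarith
    have s0: "s \<ge> 0" using s \<open>1 \<le> S0\<close> by linarith
    have ts: "t^2 = s" unfolding t_def using s0 by simp
    define X where "X = (gg s)^2 + 4 * s * (gg1 s)^2"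
    have "(t/2) * X \<le> En t" unfolding X_def ts[symmetric] by (rule En_lower[OF t1])
    also have "\<dots> \<le> En 1" by (rule En_mono[OF t1])
    also have "\<dots> \<le> C" by (simp add: C_def)
    finally have tX: "t * X \<le> 2 * C" by simp
    have "X \<le> \<delta>^2"
    proof (rule ccontr)
      assume "\<not> X \<le> \<delta>^2"
      hence "\<delta>^2 < X" by simp
      moreover have "2 * C \<le> t * \<delta>^2"
      proof -
        have "2 * C/\<delta>^2 \<le> t" using tge by linarith
        thus ?thesis using assms by (simp add: field_simps)
      qed
      moreover have "t * \<delta>^2 < t * X" using t1 \<open>\<delta>^2 < X\<close> by (intro mult_strict_left_mono) auto
      ultimately have "2 * C < t * X" by linarith
      thus False using tX by simp
    qed
    moreover have n1: "0 \<le> 4 * s * (gg1 s)^2" using s0 by simp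
    moreover have n2: "0 \<le> (gg s)^2" by simp
    moreover have e2: "(2 * sqrt s * \<bar>gg1 s\<bar>)^2 = 4 * s * (gg1 s)^2"
      using s0 by (simp add: power_mult_distrib)
    ultimately have g1: "(gg s)^2 \<le> \<delta>^2" and g2: "(2 * sqrt s * \<bar>gg1 s\<bar>)^2 \<le> \<delta>^2"
      unfolding X_def by linarith+
    have "\<bar>gg s\<bar> \<le> \<delta>" using power2_le_imp_le[of "\<bar>gg s\<bar>" \<delta>] g1 assms by simp
    moreover have "2 * sqrt s * \<bar>gg1 s\<bar> \<le> \<delta>"
      using power2_le_imp_le[OF g2] assms by simp
    hence "sqrt s * \<bar>gg1 s\<bar> \<le> \<delta>" using s0 mult_nonneg_nonneg[OF real_sqrt_ge_zero[OF s0] abs_ge_zero[of "gg1 s"]] by linarith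
    ultimately show ?thesis by simp
  qed
  ultimately show ?thesis by blast
qed



lemma K_form: "kernelK x y = 2 * pi * gg ((norm (x - y))^2)"
  by (simp add: kernelK_def J0_gg)

lemma nsq: "(norm (w + t *\<^sub>R v))^2 = (norm w)^2 + 2 * t * (inner w v) + t^2 * (norm v)^2"
  unfolding power2_norm_eq_inner by (simp add: inner_add_left inner_add_right inner_commute algebra_simps power2_eq_square)

lemma nsq_deriv: "((\<lambda>t. (norm (w + t *\<^sub>R v))^2) has_real_derivative 2 * (inner w v)) (at 0)"
proof -
  have "((\<lambda>t. (norm w)^2 + 2 * t * (inner w v) + t^2 * (norm v)^2) has_real_derivative 2 * (inner w v)) (at 0)"
    by (auto intro!: derivative_eq_intros)
  thus ?thesis by (simp only: nsq)
qed

lemma gg_comp_deriv: "((\<lambda>t. gg ((norm (w + t *\<^sub>R v))^2)) has_real_derivative gg1 ((norm w)^2) * (2 * (inner w v))) (at 0)"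
  using DERIV_chain2[OF gg_deriv nsq_deriv[of w v]] by simp

lemma gg1_comp_deriv: "((\<lambda>t. gg1 ((norm (w + t *\<^sub>R v))^2)) has_real_derivative gg2 ((norm w)^2) * (2 * (inner w v))) (at 0)"
  using DERIV_chain2[OF gg1_deriv nsq_deriv[of w v]] by simp

lemma pdiff_eq: "((\<lambda>t. f (x + t *\<^sub>R axis i 1)) has_real_derivative D) (at 0) \<Longrightarrow> pdiff i f x = D"
  by (simp add: pdiff_def DERIV_imp_deriv)

lemma Ky: "pdiff i (\<lambda>y'. kernelK x y') y = - 4 * pi * gg1 ((norm (x - y))^2) * (x - y) $ i"
proof (rule pdiff_eq)
  have e: "(\<lambda>t. kernelK x (y + t *\<^sub>R axis i 1)) = (\<lambda>t. 2 * pi * gg ((norm ((x - y) + t *\<^sub>R (- axis i 1)))^2))"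
    by (rule ext) (simp add: K_form algebra_simps)
  show "((\<lambda>t. kernelK x (y + t *\<^sub>R axis i 1)) has_real_derivative - 4 * pi * gg1 ((norm (x - y))^2) * (x - y) $ i) (at 0)"
    unfolding e by (rule DERIV_cong[OF DERIV_cmult[OF gg_comp_deriv[of "x - y" "- axis i 1"], of "2 * pi"]])
      (simp add: inner_axis algebra_simps)
qed

lemma Kx: "pdiff j (\<lambda>x'. kernelK x' y) x = 4 * pi * gg1 ((norm (x - y))^2) * (x - y) $ j"
proof (rule pdiff_eq)
  have e: "(\<lambda>t. kernelK (x + t *\<^sub>R axis j 1) y) = (\<lambda>t. 2 * pi * gg ((norm ((x - y) + t *\<^sub>R (axis j 1)))^2))"
    by (rule ext) (simp add: K_form algebra_simps)
  show "((\<lambda>t. kernelK (x + t *\<^sub>R axis j 1) y) has_real_derivative 4 * pi * gg1 ((norm (x - y))^2) * (x - y) $ j) (at 0)"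
    unfolding e by (rule DERIV_cong[OF DERIV_cmult[OF gg_comp_deriv[of "x - y" "axis j 1"], of "2 * pi"]])
      (simp add: inner_axis algebra_simps)
qed

lemma Kxy: "pdiff j (\<lambda>x'. pdiff i (\<lambda>y'. kernelK x' y') y) x
   = - 4 * pi * (2 * gg2 ((norm (x - y))^2) * (x - y) $ j * (x - y) $ i + gg1 ((norm (x - y))^2) * axis j 1 $ i)"
proof (rule pdiff_eq)
  have e: "(\<lambda>t. pdiff i (\<lambda>y'. kernelK (x + t *\<^sub>R axis j 1) y') y) =
     (\<lambda>t. (- 4 * pi) * (gg1 ((norm ((x - y) + t *\<^sub>R (axis j 1)))^2) * ((x - y) $ i + t * axis j 1 $ i)))"
    by (rule ext) (simp add: Ky algebra_simps)
  have d2: "((\<lambda>t. (x - y) $ i + t * axis j 1 $ i) has_real_derivative axis j 1 $ i) (at 0)"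
    by (auto intro!: derivative_eq_intros)
  show "((\<lambda>t. pdiff i (\<lambda>y'. kernelK (x + t *\<^sub>R axis j 1) y') y) has_real_derivative
     - 4 * pi * (2 * gg2 ((norm (x - y))^2) * (x - y) $ j * (x - y) $ i + gg1 ((norm (x - y))^2) * axis j 1 $ i)) (at 0)"
    unfolding e by (rule DERIV_cong[OF DERIV_cmult[OF DERIV_mult[OF gg1_comp_deriv[of "x - y" "axis j 1"] d2], of "- 4 * pi"]])
      (simp add: inner_axis algebra_simps)
qed



lemma S1_cases: "\<alpha> \<in> S1 \<Longrightarrow> \<alpha> = (0,0) \<or> \<alpha> = (1,0) \<or> \<alpha> = (0,1)"
  unfolding S1_def by (cases \<alpha>) auto

lemma pm00: "pdiff_multi (0,0) f = f" by (simp add: pdiff_multi_def)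
lemma pm10: "pdiff_multi (1,0) f = pdiff 1 f" by (simp add: pdiff_multi_def)
lemma pm01: "pdiff_multi (0,1) f = pdiff 2 f" by (simp add: pdiff_multi_def)
lemma pm10': "pdiff_multi (Suc 0,0) f = pdiff 1 f" by (simp add: pdiff_multi_def)
lemma pm01': "pdiff_multi (0,Suc 0) f = pdiff 2 f" by (simp add: pdiff_multi_def)

lemma K_ab_cases:
  assumes "\<alpha> \<in> S1" "\<beta> \<in> S1"
  shows "K_ab \<alpha> \<beta> x y = kernelK x y \<or> (\<exists>i. K_ab \<alpha> \<beta> x y = pdiff i (\<lambda>y'. kernelK x y') y)
    \<or> (\<exists>j. K_ab \<alpha> \<beta> x y = pdiff j (\<lambda>x'. kernelK x' y) x)
    \<or> (\<exists>i j. K_ab \<alpha> \<beta> x y = pdiff j (\<lambda>x'. pdiff i (\<lambda>y'. kernelK x' y') y) x)"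
  using S1_cases[OF assms(1)] S1_cases[OF assms(2)] by (elim disjE; simp add: K_ab_def pm00 pm10 pm01 pm10' pm01'; blast)

lemma K_ab_bound:
  assumes "\<alpha> \<in> S1" "\<beta> \<in> S1" and s1: "1 \<le> (norm (x - y))^2"
  shows "\<bar>K_ab \<alpha> \<beta> x y\<bar> \<le> 100 * (\<bar>gg ((norm (x - y))^2)\<bar> + norm (x - y) * \<bar>gg1 ((norm (x - y))^2)\<bar>)"
proof -
  define s where "s = (norm (x - y))^2"
  define w where "w = x - y"
  define A where "A = \<bar>gg s\<bar> + norm w * \<bar>gg1 s\<bar>"
  have nw1: "1 \<le> norm w" using power2_le_imp_le[of 1 "norm w"] s1 unfolding w_def by simp
  have sw: "s = norm w * norm w" by (simp add: s_def w_def power2_eq_square)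
  have pi4: "pi \<le> 4" using pi_less_4 by simp
  have ga: "\<bar>gg s\<bar> \<le> A" by (simp add: A_def)
  have g1a: "norm w * \<bar>gg1 s\<bar> \<le> A" by (simp add: A_def)
  have g1b: "\<bar>gg1 s\<bar> \<le> A" using g1a mult_right_mono[OF nw1 abs_ge_zero[of "gg1 s"]] by linarith
  have comp: "\<bar>w $ i\<bar> \<le> norm w" for i by (rule component_le_norm_cart)
  have g2: "\<bar>gg2 s\<bar> * s \<le> \<bar>gg1 s\<bar> + \<bar>gg s\<bar>"
  proof -
    have "s \<ge> 0" by (simp add: s_def)
    hence "\<bar>gg2 s\<bar> * s = \<bar>s * gg2 s\<bar>" by (simp add: abs_mult)
    also have "s * gg2 s = - gg1 s - gg s / 4" using gg_ode[of s] by linarith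
    finally show ?thesis by simp
  qed
  have c1: "\<bar>kernelK x y\<bar> \<le> 100 * A"
  proof -
    have "\<bar>kernelK x y\<bar> = 2 * pi * \<bar>gg s\<bar>" by (simp add: K_form s_def abs_mult)
    also have "\<dots> \<le> 8 * \<bar>gg s\<bar>" using pi4 by (intro mult_right_mono) auto
    also have "\<dots> \<le> 8 * A" using ga by linarith
    finally show ?thesis using ga by linarith
  qed
  have c2: "\<bar>4 * pi * gg1 s * w $ i\<bar> \<le> 100 * A" for i
  proof -
    have "\<bar>4 * pi * gg1 s * w $ i\<bar> = (4 * pi) * (\<bar>gg1 s\<bar> * \<bar>w $ i\<bar>)" by (simp add: abs_mult)
    also have "\<dots> \<le> 16 * (\<bar>gg1 s\<bar> * norm w)"
      by (intro mult_mono mult_left_mono comp) (use pi4 in auto)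
    also have "\<dots> \<le> 16 * A" using g1a by (simp add: mult.commute)
    finally show ?thesis using ga by linarith
  qed
  have c3: "\<bar>- 4 * pi * (2 * gg2 s * w $ j * w $ i + gg1 s * axis j 1 $ i)\<bar> \<le> 100 * A" for i j
  proof -
    have ax: "\<bar>axis j 1 $ i\<bar> \<le> (1::real)" by (simp add: axis_def)
    have wij: "\<bar>w $ j\<bar> * \<bar>w $ i\<bar> \<le> s" unfolding sw by (intro mult_mono comp) auto
    have t1: "\<bar>2 * gg2 s * w $ j * w $ i\<bar> \<le> 2 * (\<bar>gg1 s\<bar> + \<bar>gg s\<bar>)"
    proof -
      have "\<bar>2 * gg2 s * w $ j * w $ i\<bar> = 2 * (\<bar>gg2 s\<bar> * (\<bar>w $ j\<bar> * \<bar>w $ i\<bar>))" by (simp add: abs_mult)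
      also have "\<dots> \<le> 2 * (\<bar>gg2 s\<bar> * s)" by (intro mult_left_mono wij) auto
      also have "\<dots> \<le> 2 * (\<bar>gg1 s\<bar> + \<bar>gg s\<bar>)" using g2 by simp
      finally show ?thesis .
    qed
    have t2: "\<bar>gg1 s * axis j 1 $ i\<bar> \<le> \<bar>gg1 s\<bar>"
      using mult_left_mono[OF ax abs_ge_zero[of "gg1 s"]] by (simp add: abs_mult)
    have "\<bar>2 * gg2 s * w $ j * w $ i + gg1 s * axis j 1 $ i\<bar> \<le> 3 * A + 2 * A"
      using t1 t2 ga g1b by (smt (verit) abs_triangle_ineq)
    hence "\<bar>- 4 * pi * (2 * gg2 s * w $ j * w $ i + gg1 s * axis j 1 $ i)\<bar> \<le> (4 * pi) * (5 * A)"
      by (simp add: abs_mult)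
    also have "\<dots> \<le> 16 * (5 * A)" using pi4 ga by (intro mult_right_mono) auto
    finally show ?thesis using ga by linarith
  qed
  have "K_ab \<alpha> \<beta> x y = kernelK x y \<or> (\<exists>i. K_ab \<alpha> \<beta> x y = - 4 * pi * gg1 s * w $ i)
    \<or> (\<exists>j. K_ab \<alpha> \<beta> x y = 4 * pi * gg1 s * w $ j)
    \<or> (\<exists>i j. K_ab \<alpha> \<beta> x y = - 4 * pi * (2 * gg2 s * w $ j * w $ i + gg1 s * axis j 1 $ i))"
    using K_ab_cases[OF assms(1,2), of x y] unfolding Kxy unfolding Ky Kx s_def w_def by blast
  hence "\<bar>K_ab \<alpha> \<beta> x y\<bar> \<le> 100 * A"
    using c1 c2 c3 by (auto simp: abs_minus_commute)
  thus ?thesis by (simp add: A_def s_def w_def)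
qed



lemma sq_mem: assumes "x \<in> sq N z" "N > 0"
  shows "real_of_int (fst z) \<le> N * x$1 \<and> N * x$1 < real_of_int (fst z) + 1 \<and>
         real_of_int (snd z) \<le> N * x$2 \<and> N * x$2 < real_of_int (snd z) + 1"
  using assms unfolding sq_def by (auto simp: field_simps)

lemma sep:
  fixes a b :: int and u v N T :: real
  assumes "a \<le> N * u" "N * u < a + 1" "b \<le> N * v" "N * v < b + 1" "T + 1 \<le> \<bar>a - b\<bar>"
  shows "T < \<bar>N * u - N * v\<bar>"
  using assms by linarith

lemma far:
  assumes eps: "\<epsilon> > 0" and N: "N > 0"
  shows "\<exists>T::int. \<forall>zx zy. singular_pair \<epsilon> N zx zy \<longrightarrow> \<bar>fst zx - fst zy\<bar> \<le> T \<and> \<bar>snd zx - snd zy\<bar> \<le> T"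
proof -
  define \<delta> where "\<delta> = \<epsilon> / 200"
  have d0: "\<delta> > 0" using eps by (simp add: \<delta>_def)
  obtain S0 where S01: "S0 \<ge> 1" and S0: "\<And>s. s \<ge> S0 \<Longrightarrow> \<bar>gg s\<bar> \<le> \<delta> \<and> sqrt s * \<bar>gg1 s\<bar> \<le> \<delta>"
    using gg_decay[OF d0] by blast
  define T where "T = \<lceil>N * sqrt S0\<rceil>"
  have TN: "N * sqrt S0 \<le> real_of_int T" unfolding T_def by simp
  have key: "norm (x - y) ^ 2 < S0" if "x \<in> sq N zx" "y \<in> sq N zy" "\<alpha> \<in> S1" "\<beta> \<in> S1" "K_ab \<alpha> \<beta> x y > \<epsilon>"
    for x y zx zy \<alpha> \<beta>
  proof (rule ccontr)
    assume "\<not> norm (x - y) ^ 2 < S0"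
    hence sS: "S0 \<le> norm (x - y) ^ 2" by simp
    define s where "s = norm (x - y) ^ 2"
    have ns: "norm (x - y) = sqrt s" by (simp add: s_def)
    have "\<bar>K_ab \<alpha> \<beta> x y\<bar> \<le> 100 * (\<bar>gg s\<bar> + norm (x - y) * \<bar>gg1 s\<bar>)"
      using K_ab_bound[OF that(3,4), of x y] sS S01 unfolding s_def by linarith
    also have "\<dots> = 100 * (\<bar>gg s\<bar> + sqrt s * \<bar>gg1 s\<bar>)" by (simp only: ns)
    also have "\<dots> \<le> 100 * (\<delta> + \<delta>)" using S0[of s] sS unfolding s_def by simp
    also have "\<dots> = \<epsilon>" by (simp add: \<delta>_def)
    finally show False using that(5) by linarith
  qed
  have "\<bar>fst zx - fst zy\<bar> \<le> T \<and> \<bar>snd zx - snd zy\<bar> \<le> T" if sp: "singular_pair \<epsilon> N zx zy" for zx zy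
  proof -
    obtain x y \<alpha> \<beta> where xy: "x \<in> sq N zx" "y \<in> sq N zy" "\<alpha> \<in> S1" "\<beta> \<in> S1" "K_ab \<alpha> \<beta> x y > \<epsilon>"
      using sp unfolding singular_pair_def by blast
    have lt: "norm (x - y) ^ 2 < S0" by (rule key[OF xy])
    have nlt: "norm (x - y) < sqrt S0"
      using real_sqrt_less_mono[OF lt] by simp
    have c: "\<bar>N * x$k - N * y$k\<bar> \<le> T" for k
    proof -
      have "\<bar>N * x$k - N * y$k\<bar> = N * \<bar>(x - y)$k\<bar>" using N by (simp add: abs_mult right_diff_distrib[symmetric])
      also have "\<dots> \<le> N * norm (x - y)" using N component_le_norm_cart[of "x - y" k] by (intro mult_left_mono) auto
      also have "\<dots> \<le> N * sqrt S0" using N nlt by simp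
      finally show ?thesis using TN by linarith
    qed
    note mx = sq_mem[OF xy(1) N] and my = sq_mem[OF xy(2) N]
    have "\<not> (real_of_int T + 1 \<le> \<bar>real_of_int (fst zx) - real_of_int (fst zy)\<bar>)"
      using sep[of "fst zx" N "x$1" "fst zy" "y$1" "real_of_int T"] mx my c[of 1] by linarith
    moreover have "\<not> (real_of_int T + 1 \<le> \<bar>real_of_int (snd zx) - real_of_int (snd zy)\<bar>)"
      using sep[of "snd zx" N "x$2" "snd zy" "y$2" "real_of_int T"] mx my c[of 2] by linarith
    ultimately show ?thesis by linarith
  qed
  thus ?thesis by blast
qed


lemma fam_sub:
  assumes N: "N > 0"
  shows "sq_family N r \<subseteq> {-(\<lceil>N * \<bar>r\<bar>\<rceil> + 1)..\<lceil>N * \<bar>r\<bar>\<rceil> + 1} \<times> {-(\<lceil>N * \<bar>r\<bar>\<rceil> + 1)..\<lceil>N * \<bar>r\<bar>\<rceil> + 1}"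
proof
  fix z assume "z \<in> sq_family N r"
  then obtain p where p: "p \<in> sq N z" "norm p < r" unfolding sq_family_def by auto
  define B where "B = \<lceil>N * \<bar>r\<bar>\<rceil> + 1"
  have B: "N * \<bar>r\<bar> + 1 \<le> real_of_int B" unfolding B_def by linarith
  have pk: "\<bar>N * p$k\<bar> \<le> N * \<bar>r\<bar>" for k
  proof -
    have "\<bar>p$k\<bar> \<le> \<bar>r\<bar>" using component_le_norm_cart[of p k] p(2) by linarith
    thus ?thesis using N by (simp add: abs_mult)
  qed
  note m = sq_mem[OF p(1) N]
  have "-B \<le> fst z \<and> fst z \<le> B \<and> -B \<le> snd z \<and> snd z \<le> B"
    using m pk[of 1] pk[of 2] B by linarith
  thus "z \<in> {-(\<lceil>N * \<bar>r\<bar>\<rceil> + 1)..\<lceil>N * \<bar>r\<bar>\<rceil> + 1} \<times> {-(\<lceil>N * \<bar>r\<bar>\<rceil> + 1)..\<lceil>N * \<bar>r\<bar>\<rceil> + 1}"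
    unfolding B_def by (cases z) auto
qed

lemma count_bound:
  assumes eps: "\<epsilon> > 0" and N: "N > 0"
  shows "\<exists>C. \<forall>R. R \<ge> 1 \<longrightarrow> real (card {(zx, zy). zx \<in> sq_family N R \<and> zy \<in> sq_family N R
                                   \<and> singular_pair \<epsilon> N zx zy}) \<le> C * R^2"
proof -
  obtain T where T: "\<And>zx zy. singular_pair \<epsilon> N zx zy \<Longrightarrow> \<bar>fst zx - fst zy\<bar> \<le> T \<and> \<bar>snd zx - snd zy\<bar> \<le> T"
    using far[OF eps N] by blast
  define DT where "DT = ({-T..T} \<times> {-T..T} :: (int \<times> int) set)"
  define CT where "CT = real (card DT)"
  have "real (card {(zx, zy). zx \<in> sq_family N R \<and> zy \<in> sq_family N R \<and> singular_pair \<epsilon> N zx zy})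
        \<le> ((2 * N + 5)^2 * CT) * R^2" if R: "R \<ge> 1" for R
  proof -
    define B where "B = \<lceil>N * \<bar>R\<bar>\<rceil> + 1"
    define BB where "BB = ({-B..B} \<times> {-B..B} :: (int \<times> int) set)"
    define f where "f = (\<lambda>(a::int \<times> int, d::int \<times> int). (a, (fst a + fst d, snd a + snd d)))"
    have sub: "{(zx, zy). zx \<in> sq_family N R \<and> zy \<in> sq_family N R \<and> singular_pair \<epsilon> N zx zy} \<subseteq> f ` (BB \<times> DT)"
    proof
      fix q assume "q \<in> {(zx, zy). zx \<in> sq_family N R \<and> zy \<in> sq_family N R \<and> singular_pair \<epsilon> N zx zy}"
      then obtain zx zy where q: "q = (zx, zy)" "zx \<in> sq_family N R" "singular_pair \<epsilon> N zx zy" by auto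
      have "zx \<in> BB" using fam_sub[OF N, of R] q(2) unfolding BB_def B_def by blast
      moreover have "(fst zy - fst zx, snd zy - snd zx) \<in> DT" using T[OF q(3)] unfolding DT_def by auto
      moreover have "q = f (zx, (fst zy - fst zx, snd zy - snd zx))" unfolding f_def q by (cases zy) auto
      ultimately show "q \<in> f ` (BB \<times> DT)" by blast
    qed
    have fin: "finite (BB \<times> DT)" unfolding BB_def DT_def by simp
    have "card {(zx, zy). zx \<in> sq_family N R \<and> zy \<in> sq_family N R \<and> singular_pair \<epsilon> N zx zy} \<le> card (f ` (BB \<times> DT))"
      by (rule card_mono[OF finite_imageI[OF fin] sub])
    also have "\<dots> \<le> card (BB \<times> DT)" by (rule card_image_le[OF fin])
    also have "\<dots> = card BB * card DT" by (simp add: card_cartesian_product)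
    finally have "real (card {(zx, zy). zx \<in> sq_family N R \<and> zy \<in> sq_family N R \<and> singular_pair \<epsilon> N zx zy}) \<le> real (card BB * card DT)"
      by (simp only: of_nat_le_iff)
    hence c1: "real (card {(zx, zy). zx \<in> sq_family N R \<and> zy \<in> sq_family N R \<and> singular_pair \<epsilon> N zx zy}) \<le> real (card BB) * CT"
      unfolding CT_def by simp
    have nr: "0 < N * R" using N R by simp
    have B1: "B \<ge> 1" unfolding B_def using nr R by simp
    have cBB: "real (card BB) = (2 * real_of_int B + 1)^2"
      unfolding BB_def using B1 by (simp add: card_cartesian_product power2_eq_square)
    have "real_of_int B \<le> N * R + 2" unfolding B_def using R by linarith
    moreover have "(2 * N + 5) * R = 2 * (N * R) + 5 * R" by (simp add: algebra_simps)
    ultimately have "2 * real_of_int B + 1 \<le> (2 * N + 5) * R" using R by linarith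
    hence "(2 * real_of_int B + 1)^2 \<le> ((2 * N + 5) * R)^2" using B1 by (intro power_mono) auto
    hence "real (card BB) \<le> (2 * N + 5)^2 * R^2" using cBB by (simp add: power_mult_distrib)
    hence "real (card BB) * CT \<le> ((2 * N + 5)^2 * R^2) * CT" by (intro mult_right_mono) (auto simp: CT_def)
    thus ?thesis using c1 by (simp add: algebra_simps)
  qed
  thus ?thesis by blast
qed

theorem lemma3p3:
  fixes \<epsilon> N :: real and r :: "real \<Rightarrow> real"
  assumes "\<epsilon> > 0" and "N > 0"
    and "\<And>\<alpha> \<beta> zx zy. \<alpha> \<in> S1 \<Longrightarrow> \<beta> \<in> S1 \<Longrightarrow>
           (\<exists>x\<in>sq N zx. \<exists>y\<in>sq N zy. K_ab \<alpha> \<beta> x y > \<epsilon>) \<Longrightarrow>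
           (\<forall>a\<in>sq N zx. \<forall>b\<in>sq N zy. K_ab \<alpha> \<beta> a b > \<epsilon> / 2)"
    and "filterlim r at_top at_top"
  shows "(\<lambda>l. real (card {(zx, zy). zx \<in> sq_family N (r l) \<and> zy \<in> sq_family N (r l)
                                   \<and> singular_pair \<epsilon> N zx zy}))
         \<in> o[at_top](\<lambda>l. (r l)\<^sup>2 * ln (r l))"
proof -
  obtain C where C: "\<And>R. R \<ge> 1 \<Longrightarrow> real (card {(zx, zy). zx \<in> sq_family N R \<and> zy \<in> sq_family N R
                                   \<and> singular_pair \<epsilon> N zx zy}) \<le> C * R^2"
    using count_bound[OF assms(1,2)] by blast
  have ev: "eventually (\<lambda>l. r l \<ge> 1) at_top"
    using assms(4) unfolding filterlim_at_top by blast
  have big: "(\<lambda>l. real (card {(zx, zy). zx \<in> sq_family N (r l) \<and> zy \<in> sq_family N (r l)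
                                   \<and> singular_pair \<epsilon> N zx zy})) \<in> O[at_top](\<lambda>l. (r l)^2)"
  proof (rule bigoI[of _ C])
    show "eventually (\<lambda>l. norm (real (card {(zx, zy). zx \<in> sq_family N (r l) \<and> zy \<in> sq_family N (r l)
                                   \<and> singular_pair \<epsilon> N zx zy})) \<le> C * norm ((r l)^2)) at_top"
      using ev by eventually_elim (use C in auto)
  qed
  have "(\<lambda>x::real. x^2) \<in> o[at_top](\<lambda>x. x^2 * ln x)" by real_asymp
  hence small: "(\<lambda>l. (r l)^2) \<in> o[at_top](\<lambda>l. (r l)^2 * ln (r l))"
    by (rule landau_o.small.compose[OF _ assms(4)])
  show ?thesis by (rule landau_o.big_small_trans[OF big small])
qed


end
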